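(* Let $k$ be an odd positive integer. Then $$\sum_{n=1}^{k}\frac{1}{\cos^4(2\pi n/k)}=\sum_{n=1}^{k}\frac{1}{\cos^4(\pi n/k)}=\frac{k^2(k^2+2)}{3}.$$ *)

theory Defs
  imports "HOL-Analysis.Analysis"
begin

end

theory Submission
  imports Defs
begin

definition TT :: "(nat \<Rightarrow> complex) \<Rightarrow> nat \<Rightarrow> complex \<Rightarrow> complex" where
  "TT c k z = (\<Sum>j<k. c j * z ^ j)"

lemma TT_shift:
  assumes "k > 0" "z ^ k = 1"
    and "\<And>i. Suc i < k \<Longrightarrow> c (Suc i) + c i = d (Suc i)"
    and "c 0 + c (k - 1) = d 0"
  shows "(1 + z) * TT c k z = TT d k z"
proof -
  obtain m where k: "k = Suc m" using assms(1) by (cases k) auto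
  have zm: "z * z ^ m = 1" using assms(2) k by simp
  have "(1 + z) * TT c k z = (\<Sum>j<Suc m. c j * z ^ j) + (\<Sum>j<Suc m. c j * z ^ Suc j)"
    by (simp add: TT_def k distrib_right distrib_left sum.distrib sum_distrib_left mult_ac del: sum.lessThan_Suc)
  also have "(\<Sum>j<Suc m. c j * z ^ Suc j) = (\<Sum>j<m. c j * z ^ Suc j) + c m"
    using zm by (simp add: mult.commute)
  also have "(\<Sum>j<Suc m. c j * z ^ j) = c 0 + (\<Sum>j<m. c (Suc j) * z ^ Suc j)"
    by (subst sum.lessThan_Suc_shift) simp
  finally have L: "(1 + z) * TT c k z = c 0 + (\<Sum>j<m. c (Suc j) * z ^ Suc j) + ((\<Sum>j<m. c j * z ^ Suc j) + c m)" .
  have "TT d k z = d 0 + (\<Sum>j<m. d (Suc j) * z ^ Suc j)"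
    unfolding TT_def k by (subst sum.lessThan_Suc_shift) simp
  also have "(\<Sum>j<m. d (Suc j) * z ^ Suc j) = (\<Sum>j<m. c (Suc j) * z ^ Suc j + c j * z ^ Suc j)"
  proof (intro sum.cong refl)
    fix j assume "j \<in> {..<m}"
    then have "d (Suc j) = c (Suc j) + c j" using assms(3) k by (metis lessThan_iff Suc_less_eq)
    then show "d (Suc j) * z ^ Suc j = c (Suc j) * z ^ Suc j + c j * z ^ Suc j" by (simp add: algebra_simps)
  qed
  finally show ?thesis using assms(4) k L by (simp add: sum.distrib algebra_simps)
qed

lemma TT_sum:
  fixes u :: "complex"
  assumes "k > 0" "u ^ k = 1" "\<And>j. 0 < j \<Longrightarrow> j < k \<Longrightarrow> u ^ j \<noteq> 1"
  shows "(\<Sum>n=1..k. TT c k (u ^ n)) = of_nat k * c 0"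
proof -
  have "(\<Sum>n=1..k. TT c k (u ^ n)) = (\<Sum>j<k. c j * (\<Sum>n=1..k. (u ^ j) ^ n))"
    unfolding TT_def by (subst sum.swap) (simp add: sum_distrib_left power_mult [symmetric] mult.commute)
  also have "\<dots> = (\<Sum>j<k. if j = 0 then c 0 * of_nat k else 0)"
  proof (intro sum.cong refl)
    fix j assume j: "j \<in> {..<k}"
    show "c j * (\<Sum>n=1..k. (u ^ j) ^ n) = (if j = 0 then c 0 * of_nat k else 0)"
    proof (cases "j = 0")
      case False
      let ?v = "u ^ j"
      have v1: "?v \<noteq> 1" using assms(3) j False by auto
      have vk: "?v ^ k = 1" using assms(2) by (metis power_mult mult.commute power_one)
      have "(\<Sum>n=1..k. ?v ^ n) = ?v * (\<Sum>n<k. ?v ^ n)"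
      proof -
        have "(\<Sum>n=1..k. ?v ^ n) = (\<Sum>n<k. ?v ^ Suc n)"
          by (rule sum.reindex_bij_witness[where j="\<lambda>n. n - 1" and i=Suc]) auto
        thus ?thesis by (simp add: sum_distrib_left)
      qed
      moreover have "(1 - ?v) * (\<Sum>n<k. ?v ^ n) = 1 - ?v ^ k"
        by (simp add: one_diff_power_eq)
      hence "(\<Sum>n<k. ?v ^ n) = 0" using v1 vk by simp
      ultimately show ?thesis using False by simp
    qed simp
  qed
  also have "\<dots> = of_nat k * c 0" using assms(1) by (simp add: sum.delta)
  finally show ?thesis .
qed

definition "c0 (j::nat) = (if j = 0 then (1::complex) else 0)"
definition "c1 (j::nat) = ((-1)^j / 2 :: complex)"
definition "c2 (K::complex) (j::nat) = (-1)^j * (of_nat j / 2 + (2 - K) / 4)"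
definition "c3 (K::complex) (j::nat) = (-1)^j * ((2 * (of_nat j)^2 + (6 - 2*K) * of_nat j + 4 - 3*K) / 8)"
definition "c4 (K::complex) (j::nat) = (-1)^j * ((K^3 - 22*K + 24) / 48
   + (of_nat j * (of_nat j + 1) * (2 * of_nat j + 1) / 3 + (3 - K) * of_nat j * (of_nat j + 1) + (4 - 3*K) * of_nat j) / 8)"

lemma TT_c0: "k > 0 \<Longrightarrow> TT c0 k z = 1"
proof -
  assume k: "k > 0"
  have "TT c0 k z = (\<Sum>j<k. if j = 0 then 1 else 0)"
    unfolding TT_def c0_def by (intro sum.cong) auto
  thus ?thesis using k by simp
qed

lemma inv_step:
  assumes "k > 0" "odd k" "z ^ k = 1" "(1 + z) * TT c k z = TT d k z" "TT d k z = 1 / (1 + z) ^ m"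
  shows "TT c k z = 1 / (1 + z) ^ Suc m"
proof -
  have "z \<noteq> -1"
  proof
    assume "z = -1" with assms(2,3) show False by simp
  qed
  hence "1 + z \<noteq> 0" by (metis add.commute add_eq_0_iff)
  hence "TT c k z = TT d k z / (1 + z)" using assms(4) by (simp add: field_simps)
  thus ?thesis using assms(5) by (simp add: divide_divide_eq_left)
qed

lemma all_inv:
  assumes "k > 0" "odd k" "z ^ k = 1"
  shows "TT (c2 (of_nat k)) k z = 1 / (1 + z) ^ 2"
        "TT (c3 (of_nat k)) k z = 1 / (1 + z) ^ 3"
        "TT (c4 (of_nat k)) k z = 1 / (1 + z) ^ 4"
proof -
  obtain t where kt: "k = Suc (2 * t)" using assms(2) oddE by (metis Suc_eq_plus1)
  have K: "(of_nat k :: complex) = 2 * of_nat t + 1" using kt by simp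
  have e1: "TT c1 k z = 1 / (1 + z) ^ Suc 0"
    apply (rule inv_step[where d=c0 and m=0, OF assms])
    apply (rule TT_shift[OF assms(1,3)])
    using kt by (auto simp: c1_def c0_def TT_c0[of "Suc (2*t)"])
  have e2: "TT (c2 (of_nat k)) k z = 1 / (1 + z) ^ Suc (Suc 0)"
    apply (rule inv_step[where d=c1, OF assms _ e1])
    apply (rule TT_shift[OF assms(1,3)])
    using kt by (auto simp: c1_def c2_def K field_simps)
  have e3: "TT (c3 (of_nat k)) k z = 1 / (1 + z) ^ Suc (Suc (Suc 0))"
    apply (rule inv_step[where d="c2 (of_nat k)", OF assms _ e2])
    apply (rule TT_shift[OF assms(1,3)])
    using kt by (auto simp: c3_def c2_def K field_simps power2_eq_square)
  have e4: "TT (c4 (of_nat k)) k z = 1 / (1 + z) ^ Suc (Suc (Suc (Suc 0)))"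
    apply (rule inv_step[where d="c3 (of_nat k)", OF assms _ e3])
    apply (rule TT_shift[OF assms(1,3)])
    using kt by (auto simp: c3_def c4_def K field_simps power2_eq_square power3_eq_cube)
  show "TT (c2 (of_nat k)) k z = 1 / (1 + z) ^ 2" using e2 by (simp add: numeral_eq_Suc)
  show "TT (c3 (of_nat k)) k z = 1 / (1 + z) ^ 3" using e3 by (simp add: numeral_eq_Suc)
  show "TT (c4 (of_nat k)) k z = 1 / (1 + z) ^ 4" using e4 by (simp add: numeral_eq_Suc)
qed

lemma sec4_complex:
  fixes \<theta> :: real
  assumes "1 + exp (2 * \<i> * of_real \<theta>) \<noteq> 0"
  shows "complex_of_real (1 / cos \<theta> ^ 4)
         = 16 * (exp (2 * \<i> * of_real \<theta>))^2 / (1 + exp (2 * \<i> * of_real \<theta>))^4"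
proof -
  define e where "e = exp (\<i> * of_real \<theta>)"
  have e0: "e \<noteq> 0" unfolding e_def by simp
  have z: "exp (2 * \<i> * of_real \<theta>) = e ^ 2"
    unfolding e_def by (metis exp_of_nat_mult mult.assoc of_nat_numeral)
  have c: "complex_of_real (cos \<theta>) = (e + inverse e) / 2"
    unfolding e_def by (simp add: cos_of_real[symmetric] cos_exp_eq exp_minus)
  have ne: "1 + e^2 \<noteq> 0" using assms z by simp
  have "complex_of_real (1 / cos \<theta> ^ 4) = 1 / ((e + inverse e) / 2) ^ 4"
    by (simp add: c[symmetric])
  also have "(e + inverse e) / 2 = (1 + e^2) / (2 * e)"
    using e0 by (simp add: field_simps power2_eq_square)
  also have "1 / ((1 + e^2) / (2 * e)) ^ 4 = 16 * (e^2)^2 / (1 + e^2)^4"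
    using e0 ne by (simp add: field_simps power_mult_distrib)
  finally show ?thesis unfolding z .
qed

lemma main_sum:
  fixes k a :: nat
  assumes "k > 0" "odd k" "a = 1 \<or> a = 2"
  shows "(\<Sum>n=1..k. 1 / (cos (real a * pi * real n / real k)) ^ 4) = real k ^ 2 * (real k ^ 2 + 2) / 3"
proof -
  define r where "r m = exp (2 * of_real pi * \<i> * of_nat m / of_nat k)" for m :: nat
  define u where "u = r a"
  have rm: "r m = r 1 ^ m" for m
    unfolding r_def by (subst exp_of_nat_mult[symmetric]) (simp add: field_simps)
  have un: "u ^ n = r (a * n)" for n unfolding u_def by (simp only: rm[of a] rm[of "a*n"] power_mult)
  have uk: "u ^ k = 1"
  proof -
    have "r (a * k) = 1" using complex_root_unity_eq_1[of k "a*k"] assms(1) unfolding r_def by simp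
    thus ?thesis by (simp only: un)
  qed
  have uj: "u ^ j \<noteq> 1" if "0 < j" "j < k" for j
  proof
    assume "u ^ j = 1"
    hence "r (a * j) = 1" by (simp only: un)
    hence "k dvd a * j" using complex_root_unity_eq_1[of k "a*j"] assms(1) unfolding r_def by simp
    moreover have "coprime k a" using assms(2,3) by auto
    ultimately have "k dvd j" by (simp add: coprime_dvd_mult_right_iff)
    with that show False by (auto dest: dvd_imp_le)
  qed
  have nz: "1 + u ^ n \<noteq> 0" for n
  proof
    assume "1 + u ^ n = 0"
    hence un1: "u ^ n = -1" by (simp add: add_eq_0_iff)
    have "(u ^ n) ^ k = (-1) ^ k" by (simp only: un1)
    moreover have "(u ^ n) ^ k = (u ^ k) ^ n" by (simp add: power_mult[symmetric] mult.commute)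
    ultimately show False using uk assms(2) by simp
  qed
  have unk: "(u ^ n) ^ k = 1" for n
  proof -
    have "(u ^ n) ^ k = (u ^ k) ^ n" by (simp add: power_mult[symmetric] mult.commute)
    thus ?thesis using uk by simp
  qed
  have ang: "exp (2 * \<i> * of_real (real a * pi * real n / real k)) = u ^ n" for n
    unfolding un r_def by (simp add: field_simps)
  have "complex_of_real (\<Sum>n=1..k. 1 / (cos (real a * pi * real n / real k)) ^ 4)
      = (\<Sum>n=1..k. 16 * (u ^ n)^2 / (1 + u ^ n)^4)"
    unfolding of_real_sum using sec4_complex nz ang by (intro sum.cong refl) metis
  also have "\<dots> = (\<Sum>n=1..k. 16 * (TT (c2 (of_nat k)) k (u ^ n) - 2 * TT (c3 (of_nat k)) k (u ^ n) + TT (c4 (of_nat k)) k (u ^ n)))"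
  proof (intro sum.cong refl)
    fix n
    have aux: "16 * (w - 1)^2 / w^4 = 16 * (1/w^2 - 2 * (1/w^3) + 1/w^4)" if "w \<noteq> 0" for w :: complex
      using that by (simp add: field_simps power2_eq_square power3_eq_cube power4_eq_xxxx)
    show "16 * (u ^ n)^2 / (1 + u ^ n)^4 = 16 * (TT (c2 (of_nat k)) k (u ^ n) - 2 * TT (c3 (of_nat k)) k (u ^ n) + TT (c4 (of_nat k)) k (u ^ n))"
      unfolding all_inv[OF assms(1,2) unk] using aux[OF nz[of n]] by simp
  qed
  also have "\<dots> = 16 * (of_nat k * c2 (of_nat k) 0 - 2 * (of_nat k * c3 (of_nat k) 0) + of_nat k * c4 (of_nat k) 0)"
    using TT_sum[OF assms(1) uk uj, of "c2 (of_nat k)"] TT_sum[OF assms(1) uk uj, of "c3 (of_nat k)"]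
      TT_sum[OF assms(1) uk uj, of "c4 (of_nat k)"]
    by (simp add: sum.distrib sum_subtractf sum_distrib_left[symmetric])
  also have "\<dots> = complex_of_real (real k ^ 2 * (real k ^ 2 + 2) / 3)"
    by (simp add: c2_def c3_def c4_def field_simps power2_eq_square power3_eq_cube)
  finally show ?thesis by (simp only: of_real_eq_iff)
qed

theorem mainTheorem2:
  fixes k :: nat
  assumes "odd k" and "k > 0"
  shows "(\<Sum>n=1..k. 1 / (cos (2 * pi * real n / real k)) ^ 4)
           = (\<Sum>n=1..k. 1 / (cos (pi * real n / real k)) ^ 4)
       \<and> (\<Sum>n=1..k. 1 / (cos (pi * real n / real k)) ^ 4)
           = real k ^ 2 * (real k ^ 2 + 2) / 3"
proof -
  have A: "(\<Sum>n=1..k. 1 / (cos (2 * pi * real n / real k)) ^ 4) = real k ^ 2 * (real k ^ 2 + 2) / 3"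
    using main_sum[OF assms(2,1), of 2] by simp
  have B: "(\<Sum>n=1..k. 1 / (cos (pi * real n / real k)) ^ 4) = real k ^ 2 * (real k ^ 2 + 2) / 3"
    using main_sum[OF assms(2,1), of 1] by simp
  show ?thesis using A B by simp
qed

end
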